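(* Let $\lambda$ be a non-discrete Hausdorff linear group topology on $\mathbb{Z}$. Then there exists a metrizable locally quasi-convex Hausdorff group topology $\tau$ on $\mathbb{Z}$ which is strictly finer than $\lambda$ and satisfies $(\mathbb{Z},\tau)^\wedge=(\mathbb{Z},\lambda)^\wedge$. Consequently $\lambda$ is not the Mackey topology; in particular, for every prime $p$ the $p$-adic topology on $\mathbb{Z}$ (with neighborhood basis $\{p^n\mathbb{Z}\}_{n\in\mathbb{N}_0}$ at $0$) is not a Mackey topology.
   Context: $\mathbb{T}=\mathbb{R}/\mathbb{Z}$, $\mathbb{T}_+=[-\frac14,\frac14]+\mathbb{Z}$. For a topological abelian group $G$, $G^\wedge$ is the group of continuous homomorphisms $G\to\mathbb{T}$. A group topology is linear if it has a neighborhood basis at $0$ of subgroups. For $A\subseteq G$, $A^\triangleright=\{\chi\in G^\wedge:\chi(A)\subseteq\mathbb{T}_+\}$; for $B\subseteq G^\wedge$, $B^\triangleleft=\{x\in G:\chi(x)\in\mathbb{T}_+\ \forall\chi\in B\}$; $A$ is quasi-convex if $A=(A^\triangleright)^\triangleleft$; $G$ is locally quasi-convex if it has a neighborhood basis at $0$ of quasi-convex sets. Two locally quasi-convex group topologies on the same group are compatible if they have the same continuous characters. A locally quasi-convex group topology $\lambda$ on $G$ is the Mackey topology if it is the finest locally quasi-convex group topology on $G$ compatible with $\lambda$. *)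

theory Defs
  imports "HOL-Analysis.Analysis" "HOL-Computational_Algebra.Primes"
begin

text \<open>The circle group T = R/Z is represented by normalised representatives in [0,1);
  a character of Z is a map chi : int => real with values in [0,1) that is a homomorphism
  modulo 1. Continuity into T is continuity of the composite with the homeomorphism
  R/Z -> S^1, t |-> exp(2 pi i t).\<close>

definition Tplus :: "real \<Rightarrow> bool" where
  "Tplus x \<longleftrightarrow> frac x \<le> 1/4 \<or> frac x \<ge> 3/4"

definition group_topology_int :: "int topology \<Rightarrow> bool" where
  "group_topology_int T \<longleftrightarrow> topspace T = UNIV \<and>
     continuous_map (prod_topology T T) T (\<lambda>(x, y). x + y) \<and>
     continuous_map T T uminus"

definition nhd0 :: "int topology \<Rightarrow> int set \<Rightarrow> bool" where
  "nhd0 T N \<longleftrightarrow> (\<exists>V. openin T V \<and> 0 \<in> V \<and> V \<subseteq> N)"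

definition int_subgroup :: "int set \<Rightarrow> bool" where
  "int_subgroup H \<longleftrightarrow> 0 \<in> H \<and> (\<forall>x\<in>H. \<forall>y\<in>H. x - y \<in> H)"

definition linear_topology_int :: "int topology \<Rightarrow> bool" where
  "linear_topology_int T \<longleftrightarrow>
     (\<forall>U. nhd0 T U \<longrightarrow> (\<exists>H. int_subgroup H \<and> nhd0 T H \<and> H \<subseteq> U))"

definition dual :: "int topology \<Rightarrow> (int \<Rightarrow> real) set" where
  "dual T = {chr. (\<forall>n. 0 \<le> chr n \<and> chr n < 1) \<and>
                 (\<forall>m n. chr (m + n) = frac (chr m + chr n)) \<and>
                 continuous_map T euclidean (\<lambda>n. cis (2 * pi * chr n))}"

definition polar :: "int topology \<Rightarrow> int set \<Rightarrow> (int \<Rightarrow> real) set" where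
  "polar T A = {chr \<in> dual T. \<forall>x\<in>A. Tplus (chr x)}"

definition prepolar :: "(int \<Rightarrow> real) set \<Rightarrow> int set" where
  "prepolar B = {x. \<forall>chr\<in>B. Tplus (chr x)}"

definition quasi_convex :: "int topology \<Rightarrow> int set \<Rightarrow> bool" where
  "quasi_convex T A \<longleftrightarrow> A = prepolar (polar T A)"

definition locally_quasi_convex :: "int topology \<Rightarrow> bool" where
  "locally_quasi_convex T \<longleftrightarrow>
     (\<forall>U. nhd0 T U \<longrightarrow> (\<exists>Q. quasi_convex T Q \<and> nhd0 T Q \<and> Q \<subseteq> U))"

definition finer :: "int topology \<Rightarrow> int topology \<Rightarrow> bool" where
  "finer t L \<longleftrightarrow> (\<forall>U. openin L U \<longrightarrow> openin t U)"

definition mackey :: "int topology \<Rightarrow> bool" where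
  "mackey L \<longleftrightarrow> group_topology_int L \<and> locally_quasi_convex L \<and>
     (\<forall>\<mu>. group_topology_int \<mu> \<and> locally_quasi_convex \<mu> \<and> dual \<mu> = dual L
           \<longrightarrow> finer L \<mu>)"

definition padic_topology :: "int \<Rightarrow> int topology" where
  "padic_topology p = topology (\<lambda>U. \<forall>x\<in>U. \<exists>n::nat. {x + p ^ n * k | k. True} \<subseteq> U)"

end

theory Submission
  imports Defs
begin


definition nd :: "real \<Rightarrow> real" where "nd y = min (frac y) (1 - frac y)"

lemma Tplus_nd: "Tplus y \<longleftrightarrow> nd y \<le> 1/4"
  unfolding Tplus_def nd_def min_def by auto

lemma nd_frac[simp]: "nd (frac y) = nd y"
  unfolding nd_def by simp

lemma nd_shift: "y - z \<in> \<int> \<Longrightarrow> nd y = nd z"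
  unfolding nd_def by (metis diff_add_cancel frac_add_int_left add.commute)

lemma nd_shift_int[simp]: "nd (y + of_int k) = nd y"
  unfolding nd_def by simp

lemma nd_nonneg: "0 \<le> nd y" unfolding nd_def using frac_lt_1[of y] by simp
lemma nd_le_half: "nd y \<le> 1/2" unfolding nd_def min_def by auto

lemma nd_neg[simp]: "nd (- y) = nd y"
proof (cases "y \<in> \<int>")
  case True
  then have "frac y = 0" by simp
  moreover have "frac (-y) = 0" using True by simp
  ultimately show ?thesis unfolding nd_def by (simp only:)
qed (auto simp: nd_def frac_neg)

lemma nd_le_dist: "nd y \<le> \<bar>y - of_int k\<bar>"
proof -
  have f: "frac y = y - of_int \<lfloor>y\<rfloor>" by (simp add: frac_def)
  have a: "of_int \<lfloor>y\<rfloor> \<le> y" "y < of_int \<lfloor>y\<rfloor> + 1" by linarith+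
  show ?thesis
  proof (cases "k \<le> \<lfloor>y\<rfloor>")
    case True
    then have "real_of_int k \<le> of_int \<lfloor>y\<rfloor>" by simp
    then show ?thesis unfolding nd_def f using a by auto
  next
    case False
    then have "real_of_int k \<ge> of_int \<lfloor>y\<rfloor> + 1" by linarith
    then show ?thesis unfolding nd_def f using a by auto
  qed
qed

lemma nd_attained: "\<exists>k. nd y = \<bar>y - of_int k\<bar>"
proof -
  have f: "frac y = y - of_int \<lfloor>y\<rfloor>" by (simp add: frac_def)
  have a: "of_int \<lfloor>y\<rfloor> \<le> y" "y < of_int \<lfloor>y\<rfloor> + 1" by linarith+
  show ?thesis
  proof (cases "frac y \<le> 1 - frac y")
    case True then show ?thesis unfolding nd_def f using a
      by (intro exI[of _ "\<lfloor>y\<rfloor>"]) auto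
  next
    case False then show ?thesis unfolding nd_def f using a
      by (intro exI[of _ "\<lfloor>y\<rfloor> + 1"]) auto
  qed
qed

lemma nd_le_abs: "nd y \<le> \<bar>y\<bar>" using nd_le_dist[of y 0] by simp

lemma nd_add: "nd (a + b) \<le> nd a + nd b"
proof -
  obtain k l where k: "nd a = \<bar>a - of_int k\<bar>" and l: "nd b = \<bar>b - of_int l\<bar>"
    using nd_attained by blast
  have "nd (a+b) \<le> \<bar>a + b - of_int (k+l)\<bar>" by (rule nd_le_dist)
  also have "\<dots> \<le> nd a + nd b" unfolding k l by simp
  finally show ?thesis .
qed

lemma nd_mult: "nd (of_nat n * y) \<le> of_nat n * nd y"
proof -
  obtain k where k: "nd y = \<bar>y - of_int k\<bar>" using nd_attained by blast
  have "nd (of_nat n * y) \<le> \<bar>of_nat n * y - of_int (int n * k)\<bar>" by (rule nd_le_dist)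
  also have "\<dots> = of_nat n * nd y" unfolding k
    by (simp add: abs_mult right_diff_distrib[symmetric])
  finally show ?thesis .
qed

lemma nd_sign: "\<exists>\<sigma>::int. (\<sigma> = 1 \<or> \<sigma> = -1) \<and> of_int \<sigma> * y - nd y \<in> \<int>"
proof -
  obtain k where k: "nd y = \<bar>y - of_int k\<bar>" using nd_attained by blast
  show ?thesis
  proof (cases "y - of_int k \<ge> 0")
    case True
    then have "of_int 1 * y - nd y = of_int k" using k by simp
    then show ?thesis by (metis Ints_of_int)
  next
    case False
    then have "of_int (-1) * y - nd y = of_int (-k)" using k by simp
    then show ?thesis by (metis Ints_of_int)
  qed
qed

lemma small_nd: "0 \<le> y \<Longrightarrow> y \<le> 1/2 \<Longrightarrow> nd y \<le> 1/4 \<Longrightarrow> y \<le> 1/4"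
  unfolding nd_def by (simp add: frac_eq)

lemma qc_step:
  assumes "0 \<le> s" "s \<le> 1/2" "\<forall>i\<in>{1..m}. nd (of_nat i * s) \<le> 1/4" "1 \<le> m"
  shows "of_nat m * s \<le> 1/4"
proof -
  have "\<forall>i. 1 \<le> i \<longrightarrow> i \<le> m \<longrightarrow> of_nat i * s \<le> 1/4"
  proof (intro allI)
    fix i show "1 \<le> i \<longrightarrow> i \<le> m \<longrightarrow> of_nat i * s \<le> 1/4"
    proof (induction i)
      case 0 then show ?case by simp
    next
      case (Suc i)
      show ?case
      proof (intro impI)
        assume h: "1 \<le> Suc i" "Suc i \<le> m"
        have "Suc i \<in> {1..m}" using h by simp
        from assms(3)[rule_format, OF this] have nd: "nd (of_nat (Suc i) * s) \<le> 1/4" .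
        show "of_nat (Suc i) * s \<le> 1/4"
        proof (cases "i = 0")
          case True then show ?thesis using nd assms small_nd[of s] by simp
        next
          case False
          then have "of_nat i * s \<le> 1/4" using Suc h by simp
          moreover have "s \<le> 1/4" using assms(3) h small_nd[of s] assms(1,2) by force
          ultimately have "of_nat (Suc i) * s \<le> 1/2" by (simp add: distrib_right)
          then show ?thesis using small_nd nd assms(1) by simp
        qed
      qed
    qed
  qed
  then show ?thesis using assms(4) by simp
qed

lemma qc_lemma:
  assumes "1 \<le> m"
  shows "(\<forall>i\<in>{1..m}. nd (of_nat i * y) \<le> 1/4) \<longleftrightarrow> nd y \<le> 1 / (4 * of_nat m)"
proof
  assume a: "\<forall>i\<in>{1..m}. nd (of_nat i * y) \<le> 1/4"
  obtain \<sigma>::int where s: "\<sigma> = 1 \<or> \<sigma> = -1" "of_int \<sigma> * y - nd y \<in> \<int>" using nd_sign by blast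
  have "\<forall>i\<in>{1..m}. nd (of_nat i * nd y) \<le> 1/4"
  proof
    fix i assume i: "i \<in> {1..m}"
    have "of_nat i * (of_int \<sigma> * y) - of_nat i * nd y \<in> \<int>"
      using s(2) by (metis Ints_mult Ints_of_nat right_diff_distrib)
    then have "nd (of_nat i * (of_int \<sigma> * y)) = nd (of_nat i * nd y)" by (rule nd_shift)
    moreover have "nd (of_nat i * (of_int \<sigma> * y)) = nd (of_nat i * y)"
      using s(1) by (auto simp: algebra_simps)
    moreover have "nd (of_nat i * y) \<le> 1/4" using a i by blast
    ultimately show "nd (of_nat i * nd y) \<le> 1/4" by simp
  qed
  then have "of_nat m * nd y \<le> 1/4" using qc_step nd_nonneg nd_le_half assms by blast
  then show "nd y \<le> 1 / (4 * of_nat m)" using assms by (simp add: field_simps)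
next
  assume a: "nd y \<le> 1 / (4 * of_nat m)"
  show "\<forall>i\<in>{1..m}. nd (of_nat i * y) \<le> 1/4"
  proof
    fix i assume i: "i \<in> {1..m}"
    have "nd (of_nat i * y) \<le> of_nat i * nd y" by (rule nd_mult)
    also have "\<dots> \<le> of_nat m * (1 / (4 * of_nat m))"
      using i a nd_nonneg by (intro mult_mono) auto
    also have "\<dots> = 1/4" using assms by simp
    finally show "nd (of_nat i * y) \<le> 1/4" .
  qed
qed



locale chainL =
  fixes b :: "nat \<Rightarrow> int" and L :: "int topology"
  assumes bpos: "\<And>j. 1 \<le> b j" and bdvd: "\<And>j. b j dvd b (Suc j)"
    and bgrow: "\<And>j. (int j + 2) * b j \<le> b (Suc j)"
    and Lopen: "\<And>U. openin L U \<longleftrightarrow> (\<forall>x\<in>U. \<exists>j. \<forall>k. x + b j * k \<in> U)"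
begin

lemma bdvd_le: "i \<le> j \<Longrightarrow> b i dvd b j"
proof (induction j rule: dec_induct)
  case (step n) then show ?case using bdvd dvd_trans by blast
qed simp

lemma bmono: "i \<le> j \<Longrightarrow> b i \<le> b j"
  using bdvd_le bpos by (meson zdvd_imp_le order_less_le_trans zero_less_one)

lemma b2: "2 * b j \<le> b (Suc j)"
proof -
  have "2 * b j \<le> (int j + 2) * b j" using bpos[of j] by (intro mult_right_mono) auto
  then show ?thesis using bgrow[of j] by linarith
qed

lemma bge: "int j + 1 \<le> b j"
proof (induction j)
  case 0 then show ?case using bpos[of 0] by simp
next
  case (Suc j) then show ?case using b2[of j] bpos[of j] by simp
qed

lemma bposr: "0 < real_of_int (b j)" using bpos[of j] by simp

definition rho :: "int \<Rightarrow> real" where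
  "rho x = (SUP j. nd (real_of_int x / real_of_int (b j)))"

lemma bdd: "bdd_above (range (\<lambda>j. nd (real_of_int x / real_of_int (b j))))"
  using nd_le_half by (intro bdd_aboveI[of _ "1/2"]) auto

lemma rho_ge: "nd (real_of_int x / real_of_int (b j)) \<le> rho x"
  unfolding rho_def by (rule cSUP_upper[OF _ bdd]) simp

lemma rho_le: "(\<And>j. nd (real_of_int x / real_of_int (b j)) \<le> c) \<Longrightarrow> rho x \<le> c"
  unfolding rho_def by (rule cSUP_least) auto

lemma rho_nonneg: "0 \<le> rho x" using rho_ge[of x 0] nd_nonneg by (meson order_trans)

lemma rho_add: "rho (x + y) \<le> rho x + rho y"
proof (rule rho_le)
  fix j
  have "nd (real_of_int (x + y) / real_of_int (b j)) =
        nd (real_of_int x / real_of_int (b j) + real_of_int y / real_of_int (b j))"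
    by (simp add: add_divide_distrib)
  also have "\<dots> \<le> nd (real_of_int x / real_of_int (b j)) + nd (real_of_int y / real_of_int (b j))"
    by (rule nd_add)
  also have "\<dots> \<le> rho x + rho y" using rho_ge by (intro add_mono)
  finally show "nd (real_of_int (x + y) / real_of_int (b j)) \<le> rho x + rho y" .
qed

lemma rho_neg: "rho (- x) = rho x"
  unfolding rho_def by simp

lemma rho_0: "rho 0 = 0"
  using rho_le[of 0 0] rho_nonneg[of 0] by (simp add: nd_def)

lemma rho_small_dvd:
  assumes "rho x < 1 / real_of_int (b j)"
  shows "b j dvd x"
proof -
  have "nd (real_of_int x / real_of_int (b j)) < 1 / real_of_int (b j)"
    using rho_ge[of x j] assms by linarith
  moreover obtain k where k: "nd (real_of_int x / real_of_int (b j)) = \<bar>real_of_int x / real_of_int (b j) - of_int k\<bar>"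
    using nd_attained by blast
  ultimately have "\<bar>real_of_int x / real_of_int (b j) - of_int k\<bar> * real_of_int (b j) < 1"
    using bposr[of j] by (simp add: field_simps)
  also have "\<bar>real_of_int x / real_of_int (b j) - of_int k\<bar> * real_of_int (b j)
        = \<bar>real_of_int (x - k * b j)\<bar>"
    using bposr[of j] by (simp add: field_simps abs_mult[symmetric] abs_of_pos)
  finally have "x - k * b j = 0" by linarith
  then show ?thesis by (metis dvd_triv_right eq_iff_diff_eq_0)
qed

lemma rho_zero: assumes "rho x = 0" shows "x = 0"
proof -
  have "b j dvd x" for j using assms bposr rho_small_dvd by simp
  then have "b (nat \<bar>x\<bar>) dvd x" .
  moreover have "\<bar>x\<bar> < b (nat \<bar>x\<bar>)" using bge[of "nat \<bar>x\<bar>"] by simp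
  ultimately show ?thesis using dvd_imp_le_int[of x "b (nat \<bar>x\<bar>)"] bpos[of "nat \<bar>x\<bar>"] by fastforce
qed

definition dd :: "int \<Rightarrow> int \<Rightarrow> real" where "dd x y = rho (x - y)"

lemma ms: "Metric_space UNIV dd"
proof
  show "0 \<le> dd x y" for x y unfolding dd_def by (rule rho_nonneg)
  show "dd x y = dd y x" for x y unfolding dd_def by (metis minus_diff_eq rho_neg)
  show "dd x y = 0 \<longleftrightarrow> x = y" for x y unfolding dd_def using rho_zero[of "x - y"] rho_0 by auto
  show "dd x z \<le> dd x y + dd y z" for x y z unfolding dd_def
    using rho_add[of "x - y" "y - z"] by simp
qed

end



context chainL begin

sublocale M: Metric_space UNIV dd by (rule ms)

abbreviation "tau \<equiv> M.mtopology"

lemma openin_tau: "openin tau U \<longleftrightarrow> (\<forall>x\<in>U. \<exists>r>0. \<forall>y. rho (x - y) < r \<longrightarrow> y \<in> U)"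
  unfolding M.openin_mtopology by (auto simp: subset_iff dd_def)

lemma topspace_L: "topspace L = UNIV"
proof -
  have "openin L UNIV" using Lopen by simp
  then show ?thesis by (metis openin_subset top.extremum_uniqueI)
qed

lemma tau_group: "group_topology_int tau"
  unfolding group_topology_int_def
proof (intro conjI)
  show "topspace tau = UNIV" by simp
  show "continuous_map (prod_topology tau tau) tau (\<lambda>(x, y). x + y)"
    unfolding continuous_map
  proof (intro conjI allI impI)
    fix U assume U: "openin tau U"
    show "openin (prod_topology tau tau) {x \<in> topspace (prod_topology tau tau). (case x of (x, y) \<Rightarrow> x + y) \<in> U}"
      unfolding openin_prod_topology_alt
    proof (intro allI impI)
      fix x y assume "(x, y) \<in> {x \<in> topspace (prod_topology tau tau). (case x of (x, y) \<Rightarrow> x + y) \<in> U}"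
      then have xy: "x + y \<in> U" by simp
      then obtain r where r: "r > 0" "\<And>z. rho (x + y - z) < r \<Longrightarrow> z \<in> U"
        using U openin_tau by blast
      show "\<exists>U' V'. openin tau U' \<and> openin tau V' \<and> x \<in> U' \<and> y \<in> V' \<and>
            U' \<times> V' \<subseteq> {x \<in> topspace (prod_topology tau tau). (case x of (x, y) \<Rightarrow> x + y) \<in> U}"
      proof -
        have o: "openin tau (M.mball x (r/2))" "openin tau (M.mball y (r/2))" by auto
        have i: "x \<in> M.mball x (r/2)" "y \<in> M.mball y (r/2)" using r by auto
        have sub: "x' + y' \<in> U" if "x' \<in> M.mball x (r/2)" "y' \<in> M.mball y (r/2)" for x' y'
        proof -
          from that have "rho (x - x') < r/2" "rho (y - y') < r/2" by (auto simp: dd_def)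
          moreover have "rho (x + y - (x' + y')) \<le> rho (x - x') + rho (y - y')"
            using rho_add[of "x - x'" "y - y'"] by (simp add: algebra_simps)
          ultimately have "rho (x + y - (x' + y')) < r" by linarith
          then show ?thesis using r by simp
        qed
        have "M.mball x (r/2) \<times> M.mball y (r/2) \<subseteq> {x \<in> topspace (prod_topology tau tau). (case x of (x, y) \<Rightarrow> x + y) \<in> U}"
          using sub by auto
        with o i show ?thesis by blast
      qed
    qed
  qed simp
  show "continuous_map tau tau uminus"
    unfolding continuous_map
  proof (intro conjI allI impI)
    fix U assume U: "openin tau U"
    show "openin tau {x \<in> topspace tau. - x \<in> U}"
      unfolding openin_tau
    proof (intro ballI)
      fix x assume "x \<in> {x \<in> topspace tau. - x \<in> U}"
      then obtain r where r: "r > 0" "\<And>z. rho (- x - z) < r \<Longrightarrow> z \<in> U"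
        using U openin_tau by auto
      show "\<exists>r>0. \<forall>y. rho (x - y) < r \<longrightarrow> y \<in> {x \<in> topspace tau. - x \<in> U}"
      proof (intro exI conjI allI impI)
        fix y assume "rho (x - y) < r"
        then have "rho (- x - (- y)) < r" using rho_neg[of "x - y"] by simp
        then show "y \<in> {x \<in> topspace tau. - x \<in> U}" using r by simp
      qed (use r in auto)
    qed
  qed simp
qed

lemma finer_tau: "finer tau L"
  unfolding finer_def openin_tau
proof (intro allI impI ballI)
  fix U x assume "openin L U" "x \<in> U"
  then obtain j where j: "\<And>k. x + b j * k \<in> U" using Lopen by blast
  show "\<exists>r>0. \<forall>y. rho (x - y) < r \<longrightarrow> y \<in> U"
  proof (intro exI conjI allI impI)
    show "0 < 1 / real_of_int (b j)" using bposr by simp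
    fix y assume "rho (x - y) < 1 / real_of_int (b j)"
    then have "b j dvd (y - x)" using rho_small_dvd rho_neg by (metis minus_diff_eq)
    then obtain k where "y - x = b j * k" by blast
    then show "y \<in> U" using j[of k] by (metis add.commute diff_add_cancel)
  qed
qed

lemma tau_ne_L: "tau \<noteq> L"
proof
  assume eq: "tau = L"
  have "openin L (M.mball 0 (1/4))" by (metis eq M.openin_mball)
  moreover have "0 \<in> M.mball 0 (1/4)" by simp
  ultimately obtain j where j0: "\<forall>k. 0 + b j * k \<in> M.mball 0 (1/4)" using Lopen by meson
  have j: "b j * k \<in> M.mball 0 (1/4)" for k using j0 by simp
  obtain r where r: "b (Suc j) = b j * r" using bdvd by blast
  have "b j * 2 \<le> b j * r" using b2[of j] r by simp
  then have r2: "r \<ge> 2" using bpos[of j] by simp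
  define k where "k = r div 2"
  have k1: "3 * k \<ge> r" "2 * k \<le> r" "k \<ge> 1" using r2 unfolding k_def by linarith+
  have "rho (0 - b j * k) < 1/4" using j[of k] by (simp add: dd_def)
  moreover have "nd (real_of_int (b j * k) / real_of_int (b (Suc j))) \<le> rho (b j * k)" by (rule rho_ge)
  moreover have "real_of_int (b j * k) / real_of_int (b (Suc j)) = real_of_int k / real_of_int r"
    using r bposr[of j] by simp
  moreover have "nd (real_of_int k / real_of_int r) \<ge> 1/3"
  proof -
    have rr: "real_of_int r \<ge> 2" "3 * real_of_int k \<ge> real_of_int r" "2 * real_of_int k \<le> real_of_int r"
      using r2 k1 by linarith+
    define q where "q = real_of_int k / real_of_int r"
    have a: "0 \<le> real_of_int k / real_of_int r" "real_of_int k / real_of_int r \<le> 1/2"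
      "real_of_int k / real_of_int r \<ge> 1/3"
      using rr by (auto simp: field_simps)
    moreover have "real_of_int k / real_of_int r < 1" using a(2) by linarith
    ultimately have "frac (real_of_int k / real_of_int r) = real_of_int k / real_of_int r"
      using a(1) by (intro frac_eq[THEN iffD2] conjI)
    then have fq: "frac q = q" unfolding q_def .
    have "q \<le> 1/2" "q \<ge> 1/3" using a unfolding q_def by auto
    then show ?thesis unfolding q_def[symmetric] nd_def fq min_def by auto
  qed
  moreover have "rho (b j * k) < 1/4" using calculation(1) rho_neg[of "b j * k"] by simp
  ultimately have "1/3 \<le> rho (b j * k)" "rho (b j * k) < 1/4" by auto
  then show False by linarith
qed

lemma periodic_cont:
  fixes f :: "int \<Rightarrow> 'a::topological_space"
  assumes "\<And>x k. f (x + b j * k) = f x"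
  shows "continuous_map L euclidean f"
  unfolding continuous_map topspace_L
proof (intro conjI allI impI)
  fix U :: "'a set" assume "openin euclidean U"
  show "openin L {x \<in> UNIV. f x \<in> U}"
    unfolding Lopen by (intro ballI exI[of _ j] allI) (simp add: assms)
next
  show "f ` UNIV \<subseteq> topspace euclidean" by simp
qed

end


lemma prepolar_qc:
  assumes "B \<subseteq> dual T"
  shows "quasi_convex T (prepolar B)"
  unfolding quasi_convex_def
proof
  show "prepolar B \<subseteq> prepolar (polar T (prepolar B))"
    unfolding prepolar_def polar_def by auto
  have "B \<subseteq> polar T (prepolar B)" using assms unfolding prepolar_def polar_def by auto
  then show "prepolar (polar T (prepolar B)) \<subseteq> prepolar B"
    unfolding prepolar_def by auto
qed

context chainL begin

lemma in_dual_L: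
  assumes "\<And>n. 0 \<le> chr n \<and> chr n < 1" "\<And>m n. chr (m + n) = frac (chr m + chr n)"
    "\<And>x k. chr (x + b j * k) = chr x"
  shows "chr \<in> dual L"
  unfolding dual_def using assms periodic_cont[where j=j and f="\<lambda>n. cis (2 * pi * chr n)"] by auto

lemma cont_L_tau: "continuous_map L euclidean f \<Longrightarrow> continuous_map tau euclidean f"
  unfolding continuous_map topspace_L using finer_tau unfolding finer_def by auto

lemma dual_L_tau: "dual L \<subseteq> dual tau"
  unfolding dual_def using cont_L_tau by auto

definition chi :: "nat \<Rightarrow> nat \<Rightarrow> int \<Rightarrow> real" where
  "chi i j x = frac (of_nat i * (real_of_int x / real_of_int (b j)))"

lemma chi_dual: "chi i j \<in> dual L"
proof (rule in_dual_L[of _ j])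
  show "0 \<le> chi i j n \<and> chi i j n < 1" for n unfolding chi_def using frac_lt_1 by auto
  show "chi i j (m + n) = frac (chi i j m + chi i j n)" for m n
    unfolding chi_def by (simp add: add_divide_distrib distrib_left)
  show "chi i j (x + b j * k) = chi i j x" for x k
  proof -
    have "of_nat i * (real_of_int (x + b j * k) / real_of_int (b j)) =
          of_nat i * (real_of_int x / real_of_int (b j)) + of_int (int i * k)"
      using bposr[of j] by (simp add: field_simps)
    then show ?thesis by (simp only: chi_def frac_add_of_int_right)
  qed
qed

lemma lqc_tau: "locally_quasi_convex tau"
  unfolding locally_quasi_convex_def
proof (intro allI impI)
  fix U assume "nhd0 tau U"
  then obtain V where V: "openin tau V" "0 \<in> V" "V \<subseteq> U" unfolding nhd0_def by blast
  then obtain r where r: "r > 0" "\<And>y. rho (0 - y) < r \<Longrightarrow> y \<in> V" using openin_tau by blast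
  obtain m :: nat where m: "1 / (4 * r) < of_nat m" using reals_Archimedean2 by blast
  have m1: "1 \<le> m" using m r by (cases m) (auto simp: field_simps)
  have mr: "1 / (4 * of_nat m) < r" using m r m1 by (simp add: field_simps)
  define Q where "Q = {x. \<forall>j. nd (real_of_int x / real_of_int (b j)) \<le> 1 / (4 * of_nat m)}"
  define B where "B = {chi i j | i j. i \<in> {1..m}}"
  have QB: "Q = prepolar B"
  proof -
    have "x \<in> prepolar B \<longleftrightarrow> (\<forall>j. \<forall>i\<in>{1..m}. nd (of_nat i * (real_of_int x / real_of_int (b j))) \<le> 1/4)" for x
    proof
      assume "x \<in> prepolar B"
      then have "Tplus (chi i j x)" if "i \<in> {1..m}" for i j
        using that unfolding prepolar_def B_def by blast
      then show "\<forall>j. \<forall>i\<in>{1..m}. nd (of_nat i * (real_of_int x / real_of_int (b j))) \<le> 1/4"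
        unfolding Tplus_nd chi_def nd_frac by blast
    next
      assume h: "\<forall>j. \<forall>i\<in>{1..m}. nd (of_nat i * (real_of_int x / real_of_int (b j))) \<le> 1/4"
      show "x \<in> prepolar B" unfolding prepolar_def B_def
      proof (safe)
        fix i j assume "i \<in> {1..m}"
        then show "Tplus (chi i j x)" using h unfolding Tplus_nd chi_def nd_frac by blast
      qed
    qed
    moreover have "x \<in> Q \<longleftrightarrow> (\<forall>j. \<forall>i\<in>{1..m}. nd (of_nat i * (real_of_int x / real_of_int (b j))) \<le> 1/4)" for x
      unfolding Q_def mem_Collect_eq by (simp only: qc_lemma[OF m1])
    ultimately show ?thesis by blast
  qed
  have Bd: "B \<subseteq> dual tau" unfolding B_def using chi_dual dual_L_tau by auto
  show "\<exists>Q. quasi_convex tau Q \<and> nhd0 tau Q \<and> Q \<subseteq> U"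
  proof (intro exI conjI)
    show "quasi_convex tau Q" unfolding QB by (rule prepolar_qc[OF Bd])
    show "nhd0 tau Q" unfolding nhd0_def
    proof (intro exI conjI)
      show "openin tau (M.mball 0 (1 / (4 * of_nat m)))" by simp
      show "0 \<in> M.mball 0 (1 / (4 * of_nat m))" using m1 by simp
      show "M.mball 0 (1 / (4 * of_nat m)) \<subseteq> Q"
      proof
        fix y assume "y \<in> M.mball 0 (1 / (4 * of_nat m))"
        then have "rho y < 1 / (4 * of_nat m)" using rho_neg[of y] by (simp add: dd_def)
        then show "y \<in> Q" unfolding Q_def mem_Collect_eq using rho_ge[of y] by (meson less_imp_le order_trans allI)
      qed
    qed
    show "Q \<subseteq> U"
    proof
      fix x assume "x \<in> Q"
      then have "rho x \<le> 1 / (4 * of_nat m)" unfolding Q_def by (intro rho_le) auto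
      then have "rho (0 - x) < r" using mr rho_neg[of x] by simp
      then show "x \<in> U" using r V by auto
    qed
  qed
qed

end


context chainL begin

definition good :: "real \<Rightarrow> int \<Rightarrow> nat \<Rightarrow> bool" where
  "good \<delta> x m \<longleftrightarrow> (\<forall>j. nd (real_of_int x / real_of_int (b j)) \<le> \<delta>/2) \<and>
                 \<bar>real_of_int x\<bar> \<le> \<delta>/2 * real_of_int (b m)"

lemma good0: "0 \<le> \<delta> \<Longrightarrow> good \<delta> 0 m"
  unfolding good_def using bposr[of m] by (simp add: nd_def)

lemma good_rho: "good \<delta> x m \<Longrightarrow> rho x \<le> \<delta>/2"
  unfolding good_def by (intro rho_le) auto

lemma good_step:
  assumes g: "good \<delta> x m" and mm: "m \<le> m'" and d: "0 < \<delta>"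
    and n: "real n * real_of_int (b m') \<le> \<delta> * real_of_int (b (Suc m')) / 4"
    and s: "\<sigma> = 1 \<or> \<sigma> = -1"
  shows "good \<delta> (x + int n * \<sigma> * b m') (Suc m')"
proof -
  define y where "y = x + int n * \<sigma> * b m'"
  have absx: "\<bar>real_of_int x\<bar> \<le> \<delta>/2 * real_of_int (b m)" using g unfolding good_def by simp
  have "real_of_int (b m) \<le> real_of_int (b m')" using bmono[OF mm] by simp
  moreover have "2 * real_of_int (b m') \<le> real_of_int (b (Suc m'))" using b2[of m'] by linarith
  ultimately have bm: "\<delta>/2 * real_of_int (b m) \<le> \<delta>/4 * real_of_int (b (Suc m'))"
    using d by (simp add: field_simps)
  have "\<bar>real_of_int (int n * \<sigma> * b m')\<bar> = real n * real_of_int (b m')"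
    using s bpos[of m'] by (auto simp: abs_mult)
  moreover have "\<bar>real_of_int y\<bar> \<le> \<bar>real_of_int x\<bar> + \<bar>real_of_int (int n * \<sigma> * b m')\<bar>"
    unfolding y_def of_int_add by (rule abs_triangle_ineq)
  ultimately have absy: "\<bar>real_of_int y\<bar> \<le> \<delta>/2 * real_of_int (b (Suc m'))"
    using absx bm n by linarith
  have "nd (real_of_int y / real_of_int (b j)) \<le> \<delta>/2" for j
  proof (cases "j \<le> m'")
    case True
    then obtain c where c: "b m' = b j * c" using bdvd_le by blast
    have "real_of_int y / real_of_int (b j) = real_of_int x / real_of_int (b j) + of_int (int n * \<sigma> * c)"
      unfolding y_def c using bposr[of j] by (simp add: field_simps)
    then have "nd (real_of_int y / real_of_int (b j)) = nd (real_of_int x / real_of_int (b j))"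
      by (simp only: nd_shift_int)
    then show ?thesis using g unfolding good_def by simp
  next
    case False
    then have "b (Suc m') \<le> b j" using bmono by simp
    then have "\<delta>/2 * real_of_int (b (Suc m')) \<le> \<delta>/2 * real_of_int (b j)" using d by simp
    then have "\<bar>real_of_int y\<bar> / real_of_int (b j) \<le> \<delta>/2"
      using absy bposr[of j] by (simp add: divide_le_eq)
    moreover have "nd (real_of_int y / real_of_int (b j)) \<le> \<bar>real_of_int y\<bar> / real_of_int (b j)"
      using nd_le_abs[of "real_of_int y / real_of_int (b j)"] bposr[of j] by simp
    ultimately show ?thesis by linarith
  qed
  with absy show ?thesis unfolding good_def y_def by simp
qed


lemma nd_zero: "nd y = 0 \<Longrightarrow> y \<in> \<int>"
  unfolding nd_def using frac_lt_1[of y] by (auto simp: min_def split: if_splits)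

lemma int_comb:
  assumes "of_int x * \<theta> - v \<in> \<int>" "of_int \<sigma> * (of_int B * \<theta>) - t \<in> \<int>"
  shows "of_int (x + int n * \<sigma> * B) * \<theta> - (v + real n * t) \<in> \<int>"
proof -
  have "of_int (x + int n * \<sigma> * B) * \<theta> - (v + real n * t) =
        (of_int x * \<theta> - v) + of_nat n * (of_int \<sigma> * (of_int B * \<theta>) - t)"
    by (simp add: algebra_simps)
  then show ?thesis using assms by (metis Ints_add Ints_mult Ints_of_nat)
qed

definition tt :: "real \<Rightarrow> nat \<Rightarrow> real" where "tt \<theta> m = nd (of_int (b m) * \<theta>)"

lemma t0: "0 \<le> tt \<theta> m" "tt \<theta> m \<le> 1/2" unfolding tt_def using nd_nonneg nd_le_half by auto

lemma sig: "\<exists>\<sigma>::int. (\<sigma> = 1 \<or> \<sigma> = -1) \<and> of_int \<sigma> * (of_int (b m) * \<theta>) - tt \<theta> m \<in> \<int>"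
  unfolding tt_def by (rule nd_sign)

lemma ratio: "\<exists>r. b (Suc m) = b m * r \<and> r \<ge> 2"
proof -
  obtain r where r: "b (Suc m) = b m * r" using bdvd by blast
  have "b m * 2 \<le> b m * r" using b2[of m] r by simp
  then have "r \<ge> 2" using bpos[of m] by simp
  with r show ?thesis by blast
qed

lemma case_torsion:
  assumes M0: "\<And>m. m \<ge> M0 \<Longrightarrow> real_of_int (b (Suc m)) * tt \<theta> m < real_of_int (b m) / 2"
  shows "\<exists>M. of_int (b M) * \<theta> \<in> \<int>"
proof -
  define t where "t = tt \<theta>"
  note t0 = t0[of \<theta>, folded t_def]
  have tstep: "t (Suc m) \<ge> 2 * t m" if "m \<ge> M0" for m
  proof -
    obtain r where r: "b (Suc m) = b m * r" "r \<ge> 2" using ratio by blast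
    obtain \<sigma>::int where s: "\<sigma> = 1 \<or> \<sigma> = -1" "of_int \<sigma> * (of_int (b m) * \<theta>) - t m \<in> \<int>"
      using sig unfolding t_def by blast
    have "of_int \<sigma> * (of_int (b (Suc m)) * \<theta>) - of_int r * t m =
          of_int r * (of_int \<sigma> * (of_int (b m) * \<theta>) - t m)" unfolding r by (simp add: algebra_simps)
    then have "of_int \<sigma> * (of_int (b (Suc m)) * \<theta>) - of_int r * t m \<in> \<int>"
      using s(2) by (metis Ints_mult Ints_of_int)
    then have "nd (of_int \<sigma> * (of_int (b (Suc m)) * \<theta>)) = nd (of_int r * t m)" by (rule nd_shift)
    moreover have "nd (of_int \<sigma> * (of_int (b (Suc m)) * \<theta>)) = t (Suc m)"
      unfolding t_def tt_def using s(1) by auto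
    moreover have "of_int r * t m < 1/2"
    proof -
      have "real_of_int (b m) * (of_int r * t m) < real_of_int (b m) / 2"
        using M0[OF that] r unfolding t_def by (simp add: algebra_simps)
      then show ?thesis using bposr[of m] by (simp add: field_simps)
    qed
    moreover have "0 \<le> of_int r * t m" using t0 r by simp
    ultimately have "t (Suc m) = of_int r * t m"
      unfolding nd_def by (simp add: frac_eq min_def)
    moreover have "2 * t m \<le> of_int r * t m" using r t0(1)[of m] by (intro mult_right_mono) auto
    ultimately show ?thesis by simp
  qed
  have grow: "t (M0 + n) \<ge> 2 ^ n * t M0" for n
  proof (induction n)
    case (Suc n)
    have "2 ^ Suc n * t M0 = 2 * (2 ^ n * t M0)" by simp
    also have "\<dots> \<le> 2 * t (M0 + n)" using Suc by simp
    also have "\<dots> \<le> t (Suc (M0 + n))" using tstep by simp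
    finally show ?case by simp
  qed simp
  have "t M0 = 0"
  proof (rule ccontr)
    assume "t M0 \<noteq> 0"
    then have pos: "t M0 > 0" using t0(1)[of M0] by simp
    obtain n where n: "1 / t M0 < 2 ^ n" using real_arch_pow[of 2 "1 / t M0"] by auto
    then have "1 < 2 ^ n * t M0" using pos by (simp add: field_simps)
    then show False using grow[of n] t0(2)[of "M0 + n"] by linarith
  qed
  then show ?thesis unfolding t_def tt_def using nd_zero by blast
qed


definition NN :: "real \<Rightarrow> nat \<Rightarrow> nat" where
  "NN \<delta> m = nat \<lfloor>\<delta> * real_of_int (b (Suc m)) / (4 * real_of_int (b m))\<rfloor>"

lemma Nprop:
  assumes d: "0 < \<delta>" and M1: "16 / \<delta> < real m"
  shows "real (NN \<delta> m) * real_of_int (b m) \<le> \<delta> * real_of_int (b (Suc m)) / 4"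
    "real (NN \<delta> m) \<ge> \<delta> * real_of_int (b (Suc m)) / (8 * real_of_int (b m))"
    "NN \<delta> m \<ge> 1"
proof -
  define z where "z = \<delta> * real_of_int (b (Suc m)) / (4 * real_of_int (b m))"
  have "(int m + 2) * b m \<le> b (Suc m)" by (rule bgrow)
  then have "real_of_int ((int m + 2) * b m) \<le> real_of_int (b (Suc m))" by linarith
  then have "real_of_int (b (Suc m)) \<ge> (real m + 2) * real_of_int (b m)" by simp
  then have q: "real_of_int (b (Suc m)) / real_of_int (b m) \<ge> real m + 2"
    using bposr[of m] by (simp add: field_simps)
  have ze: "z = \<delta> / 4 * (real_of_int (b (Suc m)) / real_of_int (b m))"
    unfolding z_def by simp
  have "\<delta> / 4 * (real m + 2) \<le> \<delta> / 4 * (real_of_int (b (Suc m)) / real_of_int (b m))"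
    using q d by (intro mult_left_mono) auto
  then have "z \<ge> \<delta> / 4 * (real m + 2)" unfolding ze .
  moreover have "\<delta> * real m > 16" using M1 d by (simp add: field_simps)
  ultimately have z4: "z \<ge> 4" using d by (simp add: algebra_simps)
  have Nz: "real (NN \<delta> m) = of_int \<lfloor>z\<rfloor>" unfolding NN_def z_def[symmetric] using z4 by simp
  have "of_int \<lfloor>z\<rfloor> \<le> z" "z - 1 < of_int \<lfloor>z\<rfloor>" by linarith+
  then have "real (NN \<delta> m) \<le> z" "real (NN \<delta> m) \<ge> z / 2" "real (NN \<delta> m) \<ge> 1" using Nz z4 by linarith+
  then show "real (NN \<delta> m) * real_of_int (b m) \<le> \<delta> * real_of_int (b (Suc m)) / 4"
    "real (NN \<delta> m) \<ge> \<delta> * real_of_int (b (Suc m)) / (8 * real_of_int (b m))" "NN \<delta> m \<ge> 1"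
    unfolding z_def using bposr[of m] by (simp_all add: field_simps)
qed


lemma bad_main:
  assumes d: "0 < \<delta>" and good_nd: "\<And>x m. good \<delta> x m \<Longrightarrow> nd (of_int x * \<theta>) \<le> 1/4"
    and bad: "\<And>M0. \<exists>m\<ge>M0. real_of_int (b (Suc m)) * tt \<theta> m \<ge> real_of_int (b m) / 2"
    and M1: "16 / \<delta> < real M1"
  shows "\<exists>x m v. good \<delta> x m \<and> of_int x * \<theta> - v \<in> \<int> \<and> 0 \<le> v \<and> v \<le> 1/4 \<and>
                  real K * (\<delta>/16) \<le> v"
proof (induction K)
  case 0
  show ?case using good0[of \<delta> 0] d by (intro exI[of _ 0] exI[of _ 0] exI[of _ 0]) auto
next
  case (Suc K)
  define t where "t = tt \<theta>"
  note t0 = t0[of \<theta>, folded t_def]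
  from Suc obtain x m v where xmv: "good \<delta> x m" "of_int x * \<theta> - v \<in> \<int>" "0 \<le> v" "v \<le> 1/4"
    "real K * (\<delta>/16) \<le> v" by blast
  obtain m' where m': "m' \<ge> max m M1" "real_of_int (b (Suc m')) * t m' \<ge> real_of_int (b m') / 2"
    using bad unfolding t_def by blast
  have mM: "16 / \<delta> < real m'" "m \<le> m'" using m' M1 by auto
  note NP = Nprop[OF d mM(1)]
  obtain \<sigma>::int where s: "\<sigma> = 1 \<or> \<sigma> = -1" "of_int \<sigma> * (of_int (b m') * \<theta>) - t m' \<in> \<int>"
    using sig unfolding t_def by blast
  have "real 1 * real_of_int (b m') \<le> real (NN \<delta> m') * real_of_int (b m')"
    using NP(3) bposr[of m'] by (intro mult_right_mono) auto
  then have "real 1 * real_of_int (b m') \<le> \<delta> * real_of_int (b (Suc m')) / 4"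
    using NP(1) by linarith
  then have "good \<delta> (0 + int 1 * \<sigma> * b m') (Suc m')"
    by (rule good_step[OF good0[OF less_imp_le[OF d], of m'] order_refl d _ s(1)])
  then have "good \<delta> (\<sigma> * b m') (Suc m')" by simp
  then have "nd (of_int (\<sigma> * b m') * \<theta>) \<le> 1/4" by (rule good_nd)
  moreover have "nd (of_int (\<sigma> * b m') * \<theta>) = t m'" unfolding t_def tt_def using s(1) by auto
  ultimately have t14: "t m' \<le> 1/4" by simp
  have inner: "n \<le> NN \<delta> m' \<longrightarrow> v + real n * t m' \<le> 1/4" for n
  proof (induction n)
    case 0 then show ?case using xmv by simp
  next
    case (Suc n)
    show ?case
    proof
      assume sn: "Suc n \<le> NN \<delta> m'"
      have "real (Suc n) * real_of_int (b m') \<le> real (NN \<delta> m') * real_of_int (b m')"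
        using sn bposr[of m'] by (intro mult_right_mono) auto
      then have "real (Suc n) * real_of_int (b m') \<le> \<delta> * real_of_int (b (Suc m')) / 4"
        using NP(1) by linarith
      then have "good \<delta> (x + int (Suc n) * \<sigma> * b m') (Suc m')"
        by (rule good_step[OF xmv(1) mM(2) d _ s(1)])
      then have "nd (of_int (x + int (Suc n) * \<sigma> * b m') * \<theta>) \<le> 1/4" by (rule good_nd)
      moreover have "nd (of_int (x + int (Suc n) * \<sigma> * b m') * \<theta>) = nd (v + real (Suc n) * t m')"
        by (rule nd_shift, rule int_comb[OF xmv(2) s(2)])
      ultimately have A: "nd (v + real (Suc n) * t m') \<le> 1/4" by simp
      have "v + real n * t m' \<le> 1/4" using Suc sn by simp
      then have B: "v + real (Suc n) * t m' \<le> 1/2" "0 \<le> v + real (Suc n) * t m'"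
        using t14 xmv(3) t0(1)[of m'] by (auto simp: distrib_right)
      show "v + real (Suc n) * t m' \<le> 1/4" by (rule small_nd[OF B(2) B(1) A])
    qed
  qed
  define x' where "x' = x + int (NN \<delta> m') * \<sigma> * b m'"
  define v' where "v' = v + real (NN \<delta> m') * t m'"
  have "good \<delta> x' (Suc m')" unfolding x'_def
    by (rule good_step[OF xmv(1) mM(2) d NP(1) s(1)])
  moreover have "of_int x' * \<theta> - v' \<in> \<int>" unfolding x'_def v'_def by (rule int_comb[OF xmv(2) s(2)])
  moreover have "0 \<le> v'" unfolding v'_def using xmv(3) t0(1)[of m'] by simp
  moreover have "v' \<le> 1/4" unfolding v'_def using inner[of "NN \<delta> m'"] by simp
  moreover have "real (Suc K) * (\<delta>/16) \<le> v'"
  proof -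
    have "real (NN \<delta> m') * t m' \<ge> \<delta> * real_of_int (b (Suc m')) / (8 * real_of_int (b m')) * t m'"
      using NP(2) t0(1)[of m'] by (intro mult_right_mono) auto
    moreover have "\<delta> * real_of_int (b (Suc m')) / (8 * real_of_int (b m')) * t m' \<ge> \<delta>/16"
    proof -
      have "\<delta> * (real_of_int (b (Suc m')) * t m') \<ge> \<delta> * (real_of_int (b m') / 2)"
        using m'(2) d by (intro mult_left_mono) auto
      then show ?thesis using bposr[of m'] by (simp add: field_simps)
    qed
    ultimately have "real (NN \<delta> m') * t m' \<ge> \<delta>/16" by linarith
    moreover have "real (Suc K) * (\<delta>/16) = real K * (\<delta>/16) + \<delta>/16" by (simp add: distrib_right)
    ultimately show ?thesis unfolding v'_def using xmv(5) by linarith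
  qed
  ultimately show ?case by blast
qed


lemma core:
  assumes d: "0 < \<delta>" and h: "\<And>x. rho x < \<delta> \<Longrightarrow> nd (of_int x * \<theta>) \<le> 1/4"
  shows "\<exists>M. of_int (b M) * \<theta> \<in> \<int>"
proof (cases "\<exists>M0. \<forall>m\<ge>M0. real_of_int (b (Suc m)) * tt \<theta> m < real_of_int (b m) / 2")
  case True
  then obtain M0 where "\<And>m. m \<ge> M0 \<Longrightarrow> real_of_int (b (Suc m)) * tt \<theta> m < real_of_int (b m) / 2"
    by blast
  then show ?thesis by (rule case_torsion)
next
  case False
  then have bad: "\<And>M0. \<exists>m\<ge>M0. real_of_int (b (Suc m)) * tt \<theta> m \<ge> real_of_int (b m) / 2"
    by (meson not_le)
  have good_nd: "nd (of_int x * \<theta>) \<le> 1/4" if "good \<delta> x m" for x m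
  proof -
    have "rho x \<le> \<delta>/2" using good_rho[OF that] .
    then have "rho x < \<delta>" using d by linarith
    then show ?thesis by (rule h)
  qed
  obtain M1 :: nat where M1: "16 / \<delta> < real M1" using reals_Archimedean2 by blast
  obtain K :: nat where K: "4 / (\<delta>/16) < real K" using reals_Archimedean2 by blast
  then have K4: "real K * (\<delta>/16) > 4" using d by (simp add: field_simps)
  have "\<exists>x m v. good \<delta> x m \<and> of_int x * \<theta> - v \<in> \<int> \<and> 0 \<le> v \<and> v \<le> 1/4 \<and>
                  real K * (\<delta>/16) \<le> v"
    by (rule bad_main[OF d _ bad M1]) (rule good_nd)
  then obtain x m v where "v \<le> 1/4" "real K * (\<delta>/16) \<le> v" by blast
  with K4 show ?thesis by linarith
qed

end

lemma chr_zero: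
  fixes chr :: "int \<Rightarrow> real"
  assumes "\<And>n. 0 \<le> chr n \<and> chr n < 1" "\<And>m n. chr (m + n) = frac (chr m + chr n)"
  shows "chr 0 = (0::real)"
proof -
  have c: "chr 0 = frac (chr 0 + chr 0)" using assms(2)[of 0 0] by (simp only: add_0)
  have f: "frac (chr 0) = chr 0" using assms(1)[of 0] by (simp add: frac_eq)
  show ?thesis
  proof (cases "chr 0 + chr 0 < 1")
    case True then show ?thesis using c f frac_add[of "chr 0" "chr 0"] by simp
  next
    case False then show ?thesis using c f frac_add[of "chr 0" "chr 0"] assms(1)[of 0] by simp
  qed
qed

lemma chr_lin:
  fixes chr :: "int \<Rightarrow> real"
  assumes r: "\<And>n. 0 \<le> chr n \<and> chr n < 1" and hom: "\<And>m n. chr (m + n) = frac (chr m + chr n)"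
  shows "chr x = frac (of_int x * chr 1)"
proof (induction x rule: int_induct[where k=0])
  case base then show ?case using chr_zero[OF r hom] by simp
next
  case (step1 i)
  have "chr (i + 1) = frac (chr i + chr 1)" by (rule hom)
  also have "\<dots> = frac (of_int i * chr 1 + chr 1)" using step1(2) by simp
  also have "\<dots> = frac (of_int (i + 1) * chr 1)" by (simp add: algebra_simps)
  finally show ?case .
next
  case (step2 i)
  have e: "chr i = frac (chr (i - 1) + chr 1)" using hom[of "i - 1" 1] by simp
  have "chr (i - 1) + chr 1 - chr i \<in> \<int>" using e by (metis frac_unique_iff)
  moreover have "of_int i * chr 1 - chr i \<in> \<int>" using step2(2) by (metis frac_unique_iff)
  ultimately have "of_int (i - 1) * chr 1 - chr (i - 1) \<in> \<int>"
  proof -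
    assume a: "chr (i - 1) + chr 1 - chr i \<in> \<int>" "of_int i * chr 1 - chr i \<in> \<int>"
    have "of_int (i - 1) * chr 1 - chr (i - 1) = (of_int i * chr 1 - chr i) - (chr (i - 1) + chr 1 - chr i)"
      by (simp add: algebra_simps)
    then show ?thesis using a by (metis Ints_diff)
  qed
  then have "frac (of_int (i - 1) * chr 1) = chr (i - 1)" using r[of "i - 1"]
    unfolding frac_unique_iff by blast
  then show ?case by simp
qed

lemma cis_small:
  assumes "cmod (cis (2 * pi * c) - 1) < 1" "0 \<le> c" "c < 1"
  shows "nd c \<le> 1/4"
proof (rule ccontr)
  assume "\<not> nd c \<le> 1/4"
  moreover have "frac c = c" using assms(2,3) by (simp add: frac_eq)
  ultimately have "c > 1/4" "1 - c > 1/4" unfolding nd_def min_def by (auto split: if_splits)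
  then have "cos (2 * pi * c) < 0" by (intro cos_lt_zero_pi) (auto simp: field_simps)
  then have "\<bar>Re (cis (2 * pi * c) - 1)\<bar> > 1" by simp
  moreover have "\<bar>Re (cis (2 * pi * c) - 1)\<bar> \<le> cmod (cis (2 * pi * c) - 1)" by (rule abs_Re_le_cmod)
  ultimately show False using assms(1) by linarith
qed

context chainL begin

lemma dual_tau_L: "dual tau \<subseteq> dual L"
proof
  fix chr assume c: "chr \<in> dual tau"
  then have r: "\<And>n. 0 \<le> chr n \<and> chr n < 1" and hom: "\<And>m n. chr (m + n) = frac (chr m + chr n)"
    and cont: "continuous_map tau euclidean (\<lambda>n. cis (2 * pi * chr n))"
    unfolding dual_def by auto
  define \<theta> where "\<theta> = chr 1"
  have lin: "chr x = frac (of_int x * \<theta>)" for x unfolding \<theta>_def by (rule chr_lin[OF r hom])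
  have "openin tau {x \<in> topspace tau. cis (2 * pi * chr x) \<in> ball 1 1}"
    using cont unfolding continuous_map by auto
  moreover have "0 \<in> {x \<in> topspace tau. cis (2 * pi * chr x) \<in> ball 1 1}"
    using chr_zero[OF r hom] by simp
  ultimately obtain \<delta> where d: "\<delta> > 0" and dd: "\<And>y. rho (0 - y) < \<delta> \<Longrightarrow> cis (2 * pi * chr y) \<in> ball 1 1"
    unfolding openin_tau by blast
  have h: "nd (of_int x * \<theta>) \<le> 1/4" if "rho x < \<delta>" for x
  proof -
    have "cis (2 * pi * chr x) \<in> ball 1 1" using dd[of x] that rho_neg[of x] by simp
    then have "cmod (cis (2 * pi * chr x) - 1) < 1" by (simp add: dist_norm norm_minus_commute)
    then have "nd (chr x) \<le> 1/4" using cis_small r by blast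
    then show ?thesis using lin[of x] by simp
  qed
  obtain M where M: "of_int (b M) * \<theta> \<in> \<int>" using core[OF d h] by blast
  show "chr \<in> dual L"
  proof (rule in_dual_L[OF r hom, of M])
    fix x k
    have "of_int (x + b M * k) * \<theta> = of_int x * \<theta> + of_int k * (of_int (b M) * \<theta>)"
      by (simp add: algebra_simps)
    moreover have "of_int k * (of_int (b M) * \<theta>) \<in> \<int>" using M by (metis Ints_mult Ints_of_int)
    ultimately show "chr (x + b M * k) = chr x" unfolding lin by (simp add: frac_add_int_right)
  qed
qed

lemma main_chain:
  "\<exists>t. group_topology_int t \<and> metrizable_space t \<and> locally_quasi_convex t \<and>
       Hausdorff_space t \<and> finer t L \<and> t \<noteq> L \<and> dual t = dual L"
  using tau_group M.metrizable_space_mtopology lqc_tau M.Hausdorff_space_mtopology finer_tau tau_ne_L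
    dual_tau_L dual_L_tau by blast

lemma not_mackey: "\<not> mackey L"
proof
  assume "mackey L"
  then have "finer L tau" unfolding mackey_def using tau_group lqc_tau dual_tau_L dual_L_tau by blast
  with finer_tau have "openin L = openin tau" unfolding finer_def by blast
  then have "L = tau" by (simp add: topology_eq)
  with tau_ne_L show False by simp
qed

end


lemma padic_open:
  fixes p :: int
  defines "P \<equiv> (\<lambda>U. \<forall>x\<in>U. \<exists>n::nat. {x + p ^ n * k | k. True} \<subseteq> U)"
  shows "openin (padic_topology p) U \<longleftrightarrow> (\<forall>x\<in>U. \<exists>j. \<forall>k. x + p ^ (j * j) * k \<in> U)"
proof -
  have ist: "istopology P" unfolding istopology_def P_def
  proof (intro conjI allI impI ballI)
    fix S T x assume S: "\<forall>x\<in>S. \<exists>n::nat. {x + p ^ n * k |k. True} \<subseteq> S"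
      and T: "\<forall>x\<in>T. \<exists>n::nat. {x + p ^ n * k |k. True} \<subseteq> T" and x: "x \<in> S \<inter> T"
    obtain n1 where n1: "{x + p ^ n1 * k |k. True} \<subseteq> S" using S x by blast
    obtain n2 where n2: "{x + p ^ n2 * k |k. True} \<subseteq> T" using T x by blast
    have "{x + p ^ (n1 + n2) * k |k. True} \<subseteq> S \<inter> T"
    proof
      fix y assume "y \<in> {x + p ^ (n1 + n2) * k |k. True}"
      then obtain k where y: "y = x + p ^ (n1 + n2) * k" by blast
      have "y = x + p ^ n1 * (p ^ n2 * k)" "y = x + p ^ n2 * (p ^ n1 * k)" unfolding y
        by (simp_all add: power_add algebra_simps)
      then show "y \<in> S \<inter> T" using n1 n2 by blast
    qed
    then show "\<exists>n::nat. {x + p ^ n * k |k. True} \<subseteq> S \<inter> T" by blast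
  next
    fix K x assume K: "\<forall>U\<in>K. \<forall>x\<in>U. \<exists>n::nat. {x + p ^ n * k |k. True} \<subseteq> U" and x: "x \<in> \<Union>K"
    then obtain U where "U \<in> K" "x \<in> U" by blast
    then obtain n where "{x + p ^ n * k |k. True} \<subseteq> U" using K by blast
    with \<open>U \<in> K\<close> show "\<exists>n::nat. {x + p ^ n * k |k. True} \<subseteq> \<Union>K" by blast
  qed
  have "openin (padic_topology p) U \<longleftrightarrow> P U"
    unfolding padic_topology_def P_def[symmetric] using ist by simp
  also have "\<dots> \<longleftrightarrow> (\<forall>x\<in>U. \<exists>j. \<forall>k. x + p ^ (j * j) * k \<in> U)"
    unfolding P_def
  proof (intro ball_cong refl iffI)
    fix x assume "\<exists>n::nat. {x + p ^ n * k |k. True} \<subseteq> U"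
    then obtain n where n: "{x + p ^ n * k |k. True} \<subseteq> U" by blast
    have "x + p ^ (n * n) * k \<in> U" for k
    proof (cases n)
      case 0 then show ?thesis using n by auto
    next
      case (Suc m)
      have "p ^ (n * n) = p ^ n * p ^ (n * m)" unfolding Suc by (simp add: power_add)
      then have "x + p ^ (n * n) * k = x + p ^ n * (p ^ (n * m) * k)" by simp
      then show ?thesis using n by blast
    qed
    then show "\<exists>j. \<forall>k. x + p ^ (j * j) * k \<in> U" by blast
  next
    fix x assume "\<exists>j. \<forall>k. x + p ^ (j * j) * k \<in> U"
    then obtain j where "\<forall>k. x + p ^ (j * j) * k \<in> U" by blast
    then show "\<exists>n::nat. {x + p ^ n * k |k. True} \<subseteq> U" by blast
  qed
  finally show ?thesis .
qed

lemma padic_chain: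
  fixes p :: int assumes "prime p"
  shows "chainL (\<lambda>j. p ^ (j * j)) (padic_topology p)"
proof
  have p2: "p \<ge> 2" using assms prime_ge_2_int by blast
  show "1 \<le> p ^ (j * j)" for j using p2 by simp
  show "p ^ (j * j) dvd p ^ (Suc j * Suc j)" for j by (intro le_imp_power_dvd) simp
  show "(int j + 2) * p ^ (j * j) \<le> p ^ (Suc j * Suc j)" for j
  proof -
    have "Suc j * Suc j = j * j + (2 * j + 1)" by (simp add: algebra_simps)
    then have e: "p ^ (Suc j * Suc j) = p ^ (j * j) * p ^ (2 * j + 1)" by (simp only: power_add)
    have "int j + 2 \<le> 2 ^ (2 * j + 1)"
    proof (induction j)
      case (Suc j)
      have "(2::int) ^ (2 * Suc j + 1) = 4 * 2 ^ (2 * j + 1)" by simp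
      then show ?case using Suc by simp
    qed simp
    also have "(2::int) ^ (2 * j + 1) \<le> p ^ (2 * j + 1)" using p2 by (intro power_mono) auto
    finally have "int j + 2 \<le> p ^ (2 * j + 1)" .
    then show ?thesis unfolding e using p2 by (simp add: mult.commute)
  qed
  show "openin (padic_topology p) U \<longleftrightarrow> (\<forall>x\<in>U. \<exists>j. \<forall>k. x + p ^ (j * j) * k \<in> U)" for U
    by (rule padic_open)
qed



lemma int_subgroup_gen:
  assumes "int_subgroup H"
  shows "\<exists>g. H = range ((*) g)"
proof -
  have z: "0 \<in> H" and sub: "\<And>x y. x \<in> H \<Longrightarrow> y \<in> H \<Longrightarrow> x - y \<in> H"
    using assms unfolding int_subgroup_def by auto
  have neg: "x \<in> H \<Longrightarrow> - x \<in> H" for x using sub[OF z, of x] by simp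
  have add: "x \<in> H \<Longrightarrow> y \<in> H \<Longrightarrow> x + y \<in> H" for x y using sub[of x "- y"] neg[of y] by simp
  have mult: "g \<in> H \<Longrightarrow> g * k \<in> H" for g k
  proof (induction k rule: int_induct[where k=0])
    case base then show ?case using z by simp
  next
    case (step1 i) then show ?case using add[of "g * i" g] by (simp add: algebra_simps)
  next
    case (step2 i) then show ?case using sub[of "g * i" g] by (simp add: algebra_simps)
  qed
  show ?thesis
  proof (cases "H = {0}")
    case True then show ?thesis by (intro exI[of _ 0]) auto
  next
    case False
    then obtain x where x: "x \<in> H" "x \<noteq> 0" using z by blast
    then have "\<bar>x\<bar> \<in> H" "\<bar>x\<bar> > 0" using neg by (auto simp: abs_if)
    then have ex: "\<exists>n::nat. n > 0 \<and> int n \<in> H" by (intro exI[of _ "nat \<bar>x\<bar>"]) auto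
    define n where "n = (LEAST n::nat. n > 0 \<and> int n \<in> H)"
    have n: "n > 0" "int n \<in> H" using LeastI_ex[OF ex] unfolding n_def by auto
    have nmin: "m > 0 \<Longrightarrow> int m \<in> H \<Longrightarrow> n \<le> m" for m unfolding n_def by (rule Least_le) simp
    have "H = range ((*) (int n))"
    proof
      show "range ((*) (int n)) \<subseteq> H" using mult n(2) by auto
      show "H \<subseteq> range ((*) (int n))"
      proof
        fix y assume y: "y \<in> H"
        have "y mod int n = y - int n * (y div int n)" by (simp add: minus_div_mult_eq_mod[symmetric] algebra_simps)
        then have r: "y mod int n \<in> H" using sub[OF y mult[OF n(2)]] by simp
        have "y mod int n = 0"
        proof (rule ccontr)
          assume ne: "y mod int n \<noteq> 0"
          have "y mod int n \<ge> 0" "y mod int n < int n" using n(1) by auto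
          then have "n \<le> nat (y mod int n)" using nmin[of "nat (y mod int n)"] ne r by auto
          then have "int n \<le> int (nat (y mod int n))" by (simp only: of_nat_le_iff)
          also have "int (nat (y mod int n)) = y mod int n" using \<open>y mod int n \<ge> 0\<close> by simp
          finally show False using \<open>y mod int n < int n\<close> by linarith
        qed
        then have "y = int n * (y div int n)" using mult_div_mod_eq[of "int n" y] by linarith
        then show "y \<in> range ((*) (int n))" by blast
      qed
    qed
    then show ?thesis by blast
  qed
qed

locale linL =
  fixes L :: "int topology"
  assumes gt: "group_topology_int L" and hd: "Hausdorff_space L" and lin: "linear_topology_int L"
    and nd: "\<exists>S. \<not> openin L S"
begin

lemma topL: "topspace L = UNIV" using gt unfolding group_topology_int_def by simp

lemma transl: "openin L U \<Longrightarrow> openin L {y. a + y \<in> U}"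
proof -
  assume U: "openin L U"
  have c: "continuous_map L L (\<lambda>y. a + y)"
  proof -
    have "continuous_map L (prod_topology L L) (\<lambda>y. (a, y))"
      by (intro continuous_map_pairedI) (auto simp: topL)
    moreover have "continuous_map (prod_topology L L) L (\<lambda>(x, y). x + y)"
      using gt unfolding group_topology_int_def by simp
    ultimately have "continuous_map L L ((\<lambda>(x, y). x + y) \<circ> (\<lambda>y. (a, y)))"
      by (rule continuous_map_compose)
    then show ?thesis by (simp add: o_def)
  qed
  then have "openin L {x \<in> topspace L. a + x \<in> U}" using U unfolding continuous_map by blast
  then show ?thesis using topL by simp
qed

definition "PP = {h::int. h > 0 \<and> nhd0 L (range ((*) h))}"

lemma openL_UNIV: "openin L UNIV" using topL by (metis openin_topspace)

lemma one_PP: "1 \<in> PP"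
  unfolding PP_def nhd0_def using openL_UNIV by auto

lemma PP_nd: assumes "nhd0 L U" shows "\<exists>h\<in>PP. range ((*) h) \<subseteq> U"
proof -
  obtain H where H: "int_subgroup H" "nhd0 L H" "H \<subseteq> U" using lin assms unfolding linear_topology_int_def by blast
  obtain g where g: "H = range ((*) g)" using int_subgroup_gen[OF H(1)] by blast
  have "g \<noteq> 0"
  proof
    assume "g = 0"
    then have "H = {0}" using g by auto
    then obtain V where V: "openin L V" "0 \<in> V" "V \<subseteq> {0}" using H(2) unfolding nhd0_def by blast
    then have V0: "V = {0}" by blast
    have "openin L S" for S
    proof (subst openin_subopen, intro ballI)
      fix s assume "s \<in> S"
      have "openin L {y. - s + y \<in> V}" by (rule transl[OF V(1)])
      moreover have "{y. - s + y \<in> V} = {s}" using V0 by auto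
      ultimately show "\<exists>T. openin L T \<and> s \<in> T \<and> T \<subseteq> S" using \<open>s \<in> S\<close> by auto
    qed
    then show False using nd by blast
  qed
  have "range ((*) \<bar>g\<bar>) = range ((*) g)"
  proof (cases "g \<ge> 0")
    case False
    have rd: "range ((*) c) = {y. c dvd y}" for c :: int
      unfolding dvd_def by auto
    have "range ((*) (- g)) = range ((*) g)" unfolding rd by auto
    then show ?thesis using False by simp
  qed simp
  then have "\<bar>g\<bar> \<in> PP" "range ((*) \<bar>g\<bar>) \<subseteq> U" using H g \<open>g \<noteq> 0\<close> unfolding PP_def by auto
  then show ?thesis by blast
qed

lemma PP_lcm: assumes "a \<in> PP" "c \<in> PP" shows "lcm a c \<in> PP"
proof -
  obtain V1 where V1: "openin L V1" "0 \<in> V1" "V1 \<subseteq> range ((*) a)" using assms(1) unfolding PP_def nhd0_def by blast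
  obtain V2 where V2: "openin L V2" "0 \<in> V2" "V2 \<subseteq> range ((*) c)" using assms(2) unfolding PP_def nhd0_def by blast
  have "range ((*) a) \<inter> range ((*) c) \<subseteq> range ((*) (lcm a c))"
  proof
    fix y assume "y \<in> range ((*) a) \<inter> range ((*) c)"
    then have "a dvd y" "c dvd y" unfolding dvd_def by auto
    then have "lcm a c dvd y" by simp
    then obtain k where "y = lcm a c * k" by (rule dvdE)
    then show "y \<in> range ((*) (lcm a c))" by (simp add: rangeI)
  qed
  then have "nhd0 L (range ((*) (lcm a c)))" unfolding nhd0_def using V1 V2
    by (intro exI[of _ "V1 \<inter> V2"]) auto
  moreover have "lcm a c > 0" using assms unfolding PP_def by (simp add: lcm_pos_int)
  ultimately show ?thesis unfolding PP_def by simp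
qed

lemma PP_big: assumes "h \<in> PP" shows "\<exists>h'\<in>PP. h dvd h' \<and> K < h'"
proof -
  define x where "x = int (fact (nat K))"
  have x0: "x \<noteq> 0" unfolding x_def by simp
  obtain U V where UV: "openin L U" "openin L V" "0 \<in> U" "x \<in> V" "disjnt U V"
  proof -
    have "0 \<in> topspace L" "x \<in> topspace L" "(0::int) \<noteq> x" using topL x0 by auto
    then show ?thesis using hd unfolding Hausdorff_space_def using that by blast
  qed
  then have "nhd0 L U" unfolding nhd0_def by blast
  then obtain g where g: "g \<in> PP" "range ((*) g) \<subseteq> U" using PP_nd by blast
  have "\<not> g dvd x"
  proof
    assume "g dvd x"
    then have "x \<in> U" using g(2) by (auto elim!: dvdE)
    then show False using UV by (auto simp: disjnt_def)
  qed
  have gK: "K < g"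
  proof (rule ccontr)
    assume "\<not> K < g"
    then have "nat g \<le> nat K" "1 \<le> nat g" using g(1) unfolding PP_def by auto
    then have "nat g dvd fact (nat K)" by (rule dvd_fact[rotated])
    then have "int (nat g) dvd x" unfolding x_def by (metis int_dvd_int_iff)
    then show False using \<open>\<not> g dvd x\<close> g(1) unfolding PP_def by simp
  qed
  have "lcm h g \<in> PP" by (rule PP_lcm[OF assms g(1)])
  moreover have "g \<le> lcm h g"
    using calculation unfolding PP_def by (intro zdvd_imp_le) auto
  ultimately show ?thesis using gK by (intro bexI[of _ "lcm h g"]) auto
qed

lemma PP_count: "countable PP" by (rule countable_subset[OF subset_UNIV]) simp

definition ee :: "nat \<Rightarrow> int" where "ee = from_nat_into PP"

lemma ee_range: "range ee = PP" unfolding ee_def using one_PP PP_count by (intro range_from_nat_into) auto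

definition nxt :: "int \<Rightarrow> nat \<Rightarrow> int" where
  "nxt c j = (SOME h. h \<in> PP \<and> c dvd h \<and> (int j + 2) * c \<le> h)"

lemma nxt: assumes "c \<in> PP" shows "nxt c j \<in> PP \<and> c dvd nxt c j \<and> (int j + 2) * c \<le> nxt c j"
proof -
  obtain h where "h \<in> PP" "c dvd h" "(int j + 2) * c < h" using PP_big[OF assms] by blast
  then have "\<exists>h. h \<in> PP \<and> c dvd h \<and> (int j + 2) * c \<le> h" using less_imp_le by blast
  then show ?thesis unfolding nxt_def by (rule someI_ex)
qed

primrec bs :: "nat \<Rightarrow> int" where
  "bs 0 = 1" | "bs (Suc j) = nxt (lcm (bs j) (ee j)) j"

lemma bs_PP: "bs j \<in> PP"
proof (induction j)
  case 0 then show ?case using one_PP by simp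
next
  case (Suc j)
  have "ee j \<in> PP" using ee_range by blast
  then have "lcm (bs j) (ee j) \<in> PP" using PP_lcm Suc by blast
  then show ?case using nxt by simp
qed

lemma bs_props: "1 \<le> bs j" "bs j dvd bs (Suc j)" "(int j + 2) * bs j \<le> bs (Suc j)" "ee j dvd bs (Suc j)"
proof -
  have e: "ee j \<in> PP" using ee_range by blast
  have l: "lcm (bs j) (ee j) \<in> PP" using PP_lcm bs_PP e by blast
  note n = nxt[OF l, of j]
  show "1 \<le> bs j" using bs_PP[of j] unfolding PP_def by simp
  show "bs j dvd bs (Suc j)" using n by (auto intro: dvd_trans)
  show "ee j dvd bs (Suc j)" using n by (auto intro: dvd_trans)
  have "bs j \<le> lcm (bs j) (ee j)" using l unfolding PP_def by (intro zdvd_imp_le) auto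
  then have "(int j + 2) * bs j \<le> (int j + 2) * lcm (bs j) (ee j)" by (intro mult_left_mono) auto
  moreover have "(int j + 2) * lcm (bs j) (ee j) \<le> bs (Suc j)" using n by simp
  ultimately show "(int j + 2) * bs j \<le> bs (Suc j)" by (rule order_trans)
qed

lemma chain: "chainL bs L"
proof
  show "1 \<le> bs j" "bs j dvd bs (Suc j)" "(int j + 2) * bs j \<le> bs (Suc j)" for j by (rule bs_props)+
  show "openin L U \<longleftrightarrow> (\<forall>x\<in>U. \<exists>j. \<forall>k. x + bs j * k \<in> U)" for U
  proof
    assume U: "openin L U"
    show "\<forall>x\<in>U. \<exists>j. \<forall>k. x + bs j * k \<in> U"
    proof
      fix x assume x: "x \<in> U"
      have "nhd0 L {y. x + y \<in> U}" unfolding nhd0_def using transl[OF U, of x] x by auto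
      then obtain h where h: "h \<in> PP" "range ((*) h) \<subseteq> {y. x + y \<in> U}" using PP_nd by blast
      obtain i where i: "h = ee i" using h(1) ee_range by (metis rangeE)
      obtain c where c: "bs (Suc i) = h * c" using bs_props(4)[of i] i by blast
      have "x + bs (Suc i) * k \<in> U" for k using h(2) unfolding c by (auto simp: mult.assoc)
      then show "\<exists>j. \<forall>k. x + bs j * k \<in> U" by blast
    qed
  next
    assume h: "\<forall>x\<in>U. \<exists>j. \<forall>k. x + bs j * k \<in> U"
    show "openin L U"
    proof (subst openin_subopen, intro ballI)
      fix x assume x: "x \<in> U"
      then obtain j where j: "\<forall>k. x + bs j * k \<in> U" using h by blast
      obtain V where V: "openin L V" "0 \<in> V" "V \<subseteq> range ((*) (bs j))"
        using bs_PP[of j] unfolding PP_def nhd0_def by blast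
      have "openin L {y. - x + y \<in> V}" by (rule transl[OF V(1)])
      moreover have "x \<in> {y. - x + y \<in> V}" using V by simp
      moreover have "{y. - x + y \<in> V} \<subseteq> U"
      proof
        fix y assume "y \<in> {y. - x + y \<in> V}"
        then obtain k where "- x + y = bs j * k" using V(3) by auto
        then have "y = x + bs j * k" by simp
        then show "y \<in> U" using j by simp
      qed
      ultimately show "\<exists>T. openin L T \<and> x \<in> T \<and> T \<subseteq> U" by blast
    qed
  qed
qed

end

theorem theorem4p6:
  shows "(\<forall>L. group_topology_int L \<and> Hausdorff_space L \<and> linear_topology_int L \<and>
             (\<exists>S. \<not> openin L S) \<longrightarrow>
           (\<exists>t. group_topology_int t \<and> metrizable_space t \<and> locally_quasi_convex t \<and>
                 Hausdorff_space t \<and> finer t L \<and> t \<noteq> L \<and> dual t = dual L) \<and>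
           \<not> mackey L) \<and>
         (\<forall>p::int. prime p \<longrightarrow> \<not> mackey (padic_topology p))"
proof (intro conjI allI impI)
  fix L assume "group_topology_int L \<and> Hausdorff_space L \<and> linear_topology_int L \<and> (\<exists>S. \<not> openin L S)"
  then have "linL L" unfolding linL_def by blast
  then have c: "chainL (linL.bs L) L" by (rule linL.chain)
  show "\<exists>t. group_topology_int t \<and> metrizable_space t \<and> locally_quasi_convex t \<and>
                 Hausdorff_space t \<and> finer t L \<and> t \<noteq> L \<and> dual t = dual L"
    by (rule chainL.main_chain[OF c])
  show "\<not> mackey L" by (rule chainL.not_mackey[OF c])
next
  fix p :: int assume "prime p"
  show "\<not> mackey (padic_topology p)" by (rule chainL.not_mackey[OF padic_chain[OF \<open>prime p\<close>]])
qed

end
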